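(* Inserting $n$ values, one at a time, into an initially empty black-white array (BWA) takes $O(\log n)$ average (amortized) time per insertion.
   Context: A black-white array (BWA) of size $N=2^K$ stores values from a totally ordered set. It has a white array $W[1..N-1]$ and a black array $B[1..N/2-1]$. For $i\ge0$, the segment of rank $i$ of either array is the index block $[2^i,2^{i+1}-1]$. A state variable $\mathtt{total}$ counts stored values and is initially $0$. The rank-$i$ segment is active iff bit $i$ of $\mathtt{total}$ is $1$. Insert$(v)$: if rank 0 is inactive, set $W[1]=v$; otherwise set $B[1]=v$ and perform $\mathrm{merge}(0)$. $\mathrm{merge}(i)$: merge the sorted white and black segments of rank $i$ using a standard two-way merge, at cost proportional to the segment length. The result goes into the white rank-$(i+1)$ segment if that segment is inactive. Otherwise it goes into the black rank-$(i+1)$ segment, followed by $\mathrm{merge}(i+1)$. When an insertion completes, $\mathtt{total}$ has increased by one. *)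

theory Defs
  imports Main "HOL-Library.Landau_Symbols"
begin

text \<open>The arrays are modelled as total functions on indices;
  for N = 2^K with n \<le> N-1 insertions only the indices 1..N-1 (white) and
  1..N/2-1 (black) are ever touched, so no bound on the indices is needed.\<close>

record 'a bwa =
  wht :: "nat \<Rightarrow> 'a"
  blk :: "nat \<Rightarrow> 'a"
  total :: nat

definition seg :: "(nat \<Rightarrow> 'a) \<Rightarrow> nat \<Rightarrow> 'a list" where
  "seg A i = map A [2^i..<2^(Suc i)]"

definition write_seg :: "(nat \<Rightarrow> 'a) \<Rightarrow> nat \<Rightarrow> 'a list \<Rightarrow> (nat \<Rightarrow> 'a)" where
  "write_seg A i xs = (\<lambda>j. if 2^i \<le> j \<and> j < 2^(Suc i) then xs ! (j - 2^i) else A j)"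

definition active :: "'a bwa \<Rightarrow> nat \<Rightarrow> bool" where
  "active s i = bit (total s) i"

fun merge2 :: "'a::linorder list \<Rightarrow> 'a list \<Rightarrow> 'a list" where
  "merge2 [] ys = ys"
| "merge2 xs [] = xs"
| "merge2 (x # xs) (y # ys) =
     (if x \<le> y then x # merge2 xs (y # ys) else y # merge2 (x # xs) ys)"

text \<open>merge(i): returns the new state together with its cost. Merging two
  segments of rank i costs 2^(i+1) (the length of the merged output, i.e.
  proportional to the segment length).\<close>
function bwa_merge :: "nat \<Rightarrow> 'a::linorder bwa \<Rightarrow> 'a bwa \<times> nat" where
  "bwa_merge i s =
     (let m = merge2 (seg (wht s) i) (seg (blk s) i); c = 2 ^ Suc i in
      if \<not> active s (Suc i) then (s\<lparr>wht := write_seg (wht s) (Suc i) m\<rparr>, c)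
      else (let r = bwa_merge (Suc i) (s\<lparr>blk := write_seg (blk s) (Suc i) m\<rparr>)
            in (fst r, c + snd r)))"
  by pat_completeness auto
termination
proof (relation "measure (\<lambda>(i, s). total s div 2 ^ i)")
  fix i :: nat and s :: "'a bwa" and m c
  assume "\<not> \<not> active s (Suc i)"
  hence b: "bit (total s) (Suc i)" by (simp add: active_def)
  hence pos: "total s div 2 ^ Suc i > 0"
    by (metis bit_iff_odd div_0 gr0I even_zero)
  have "total s div 2 ^ Suc i = (total s div 2 ^ i) div 2"
    by (metis div_exp_eq power_one_right plus_1_eq_Suc add.commute)
  with pos show "((Suc i, s\<lparr>blk := write_seg (blk s) (Suc i) m\<rparr>), (i, s))
      \<in> measure (\<lambda>(i, s). total s div 2 ^ i)" by simp
qed simp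

definition bwa_insert :: "'a::linorder \<Rightarrow> 'a bwa \<Rightarrow> 'a bwa \<times> nat" where
  "bwa_insert v s =
     (if \<not> active s 0 then (s\<lparr>wht := (wht s)(1 := v), total := Suc (total s)\<rparr>, 1)
      else (let r = bwa_merge 0 (s\<lparr>blk := (blk s)(1 := v)\<rparr>)
            in ((fst r)\<lparr>total := Suc (total s)\<rparr>, 1 + snd r)))"

definition bwa_empty :: "'a bwa" where
  "bwa_empty = \<lparr>wht = (\<lambda>_. undefined), blk = (\<lambda>_. undefined), total = 0\<rparr>"

fun insert_all :: "'a::linorder list \<Rightarrow> 'a bwa \<Rightarrow> 'a bwa \<times> nat" where
  "insert_all [] s = (s, 0)"
| "insert_all (v # vs) s =
     (let r = bwa_insert v s; r' = insert_all vs (fst r) in (fst r', snd r + snd r'))"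

end

theory Submission
  imports Defs
begin

function gc :: "nat \<Rightarrow> nat \<Rightarrow> nat" where
  "gc i t = 2 ^ Suc i + (if bit t (Suc i) then gc (Suc i) t else 0)"
  by pat_completeness auto
termination
proof (relation "measure (\<lambda>(i, t). t div 2 ^ i)")
  fix i t :: nat
  assume b: "bit t (Suc i)"
  hence pos: "t div 2 ^ Suc i > 0"
    by (metis bit_iff_odd div_0 gr0I even_zero)
  have "t div 2 ^ Suc i = (t div 2 ^ i) div 2"
    by (metis div_exp_eq power_one_right plus_1_eq_Suc add.commute)
  with pos show "((Suc i, t), (i, t)) \<in> measure (\<lambda>(i, t). t div 2 ^ i)" by simp
qed simp

declare gc.simps[simp del]

lemma merge_props:
  "total (fst (bwa_merge i s)) = total s \<and> snd (bwa_merge i s) = gc i (total s)"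
proof (induction i s rule: bwa_merge.induct)
  case (1 i s)
  show ?case
    apply (subst bwa_merge.simps)
    apply (subst gc.simps)
    using 1 by (auto simp: Let_def active_def)
qed

definition ic :: "nat \<Rightarrow> nat" where
  "ic t = (if \<not> bit t 0 then 1 else 1 + gc 0 t)"

lemma insert_props:
  "total (fst (bwa_insert v s)) = Suc (total s) \<and> snd (bwa_insert v s) = ic (total s)"
  using merge_props[of 0 "s\<lparr>blk := (blk s)(1 := v)\<rparr>"]
  by (auto simp: bwa_insert_def ic_def Let_def active_def)

lemma insert_all_cost:
  "snd (insert_all vs s) = (\<Sum>j<length vs. ic (total s + j))"
proof (induction vs arbitrary: s)
  case Nil
  then show ?case by simp
next
  case (Cons v vs)
  show ?case
    using Cons[of "fst (bwa_insert v s)"] insert_props[of v s]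
    by (simp add: Let_def sum.lessThan_Suc_shift del: sum.lessThan_Suc)
qed

lemma gc_odd: "gc (Suc i) (2*t+1) = 2 * gc i t"
proof (induction i t rule: gc.induct)
  case (1 i t)
  have b: "bit (2*t+1) (Suc (Suc i)) = bit t (Suc i)"
    by (simp add: bit_Suc)
  show ?case
    apply (subst gc.simps)
    apply (subst (2) gc.simps)
    using 1 b by auto
qed

lemma ic_even: "ic (2*t) = 1"
  by (simp add: ic_def bit_0)

lemma ic_odd: "ic (2*t+1) = 2 * ic t + 1"
proof -
  have b: "bit (2*t+1) (Suc 0) = bit t 0"
    by (simp add: bit_Suc)
  have "gc 0 (2*t+1) = 2 + (if bit t 0 then 2 * gc 0 t else 0)"
    apply (subst gc.simps) using b gc_odd[of 0 t] by simp
  then show ?thesis by (auto simp: ic_def bit_0)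
qed

definition T :: "nat \<Rightarrow> nat" where
  "T n = (\<Sum>t<n. ic t)"

lemma sum_even_odd: "(\<Sum>t<2*m. f t) = (\<Sum>t<m. f (2*t)) + (\<Sum>t<m. f (2*t+1))"
  for f :: "nat \<Rightarrow> nat"
  by (induction m) (auto simp: ac_simps)

lemma T_even: "T (2*m) = 2*m + 2 * T m"
  unfolding T_def sum_even_odd by (simp add: ic_even ic_odd[simplified] sum.distrib sum_distrib_left sum_Suc)

lemma T_odd: "T (2*m+1) = T (2*m) + 1"
  unfolding T_def using ic_even[of m] by simp

lemma T_bound: "n \<le> 2^k \<Longrightarrow> T n \<le> n * (2*k+1)"
proof (induction k arbitrary: n)
  case 0
  then have "n = 0 \<or> n = 1" by auto
  then show ?case by (auto simp: T_def ic_def)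
next
  case (Suc k)
  define m where "m = n div 2"
  have m: "m \<le> 2^k" using Suc.prems unfolding m_def by auto
  have Tm: "T m \<le> m * (2*k+1)" using Suc.IH m by blast
  have e: "T (2*m) \<le> 2*m*(2*k+2)" using Tm T_even[of m] by (simp add: algebra_simps)
  show ?case
  proof (cases "even n")
    case True
    then have "n = 2*m" unfolding m_def by simp
    then show ?thesis using e by (simp add: algebra_simps)
  next
    case False
    then have "n = 2*m+1" unfolding m_def by simp
    then show ?thesis using e T_odd[of m] by (simp add: algebra_simps)
  qed
qed

lemma total_cost: "snd (insert_all vs bwa_empty) = T (length vs)"
  by (simp add: insert_all_cost T_def bwa_empty_def)

theorem mainTheorem7:
  "\<exists>C::real. \<forall>vs :: 'a::linorder list. length vs \<ge> 2 \<longrightarrow>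
     real (snd (insert_all vs bwa_empty)) / real (length vs)
       \<le> C * ln (real (length vs))"
proof (intro exI allI impI)
  fix vs :: "'a list"
  assume n2: "length vs \<ge> 2"
  define n where "n = length vs"
  have n2': "n \<ge> 2" using n2 n_def by simp
  define k where "k = (LEAST k. n \<le> 2^k)"
  have ex: "\<exists>k. n \<le> 2^k" by (metis less_exp less_imp_le)
  have nk: "n \<le> 2^k" unfolding k_def using LeastI_ex[OF ex] .
  have k0: "k \<ge> 1" using nk n2' by (cases k) auto
  have lt: "2^(k-1) < n"
  proof (rule ccontr)
    assume "\<not> 2^(k-1) < n"
    then have "n \<le> 2^(k-1)" by simp
    then have "k \<le> k - 1" unfolding k_def by (rule Least_le)
    then show False using k0 by simp
  qed
  have "real (2^(k-1)) < real n" using lt by linarith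
  then have "ln (real (2^(k-1))) < ln (real n)" by simp
  then have lk: "real (k-1) * ln 2 < ln (real n)" by (simp add: ln_realpow)
  have ln2: "ln (2::real) > 0" by simp
  have ln2n: "ln 2 \<le> ln (real n)" using n2' by simp
  have kb: "real k < ln (real n) / ln 2 + 1"
    using lk k0 ln2 by (simp add: field_simps of_nat_diff)
  have "T n \<le> n * (2*k+1)" using T_bound nk by blast
  then have "real (T n) \<le> real n * (2 * real k + 1)"
    by (metis of_nat_le_iff of_nat_mult of_nat_add of_nat_1 of_nat_numeral mult_2)
  then have "real (T n) / real n \<le> 2 * real k + 1" using n2'
    by (simp add: field_simps)
  also have "\<dots> \<le> 2 * (ln (real n) / ln 2) + 3" using kb by simp
  also have "\<dots> \<le> (5 / ln 2) * ln (real n)"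
  proof -
    have "3 \<le> 3 * (ln (real n) / ln 2)" using ln2n ln2 by (simp add: field_simps)
    then show ?thesis by (simp add: field_simps)
  qed
  finally show "real (snd (insert_all vs bwa_empty)) / real (length vs)
       \<le> (5 / ln 2) * ln (real (length vs))"
    using total_cost[of vs] n_def by simp
qed

end
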